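(* If $X$ is an infinite compact Hausdorff $\Delta$-space, then the Banach space $C(X)$ (with the sup norm) is not a Grothendieck space. The converse fails: for $X=[0,\omega_1]$, $C(X)$ is not a Grothendieck space but $X$ is not a $\Delta$-space.
   Context: A Banach space $E$ is a Grothendieck space if every weak$^*$-convergent sequence in the dual $E^*$ converges weakly. A topological space $X$ is a $\Delta$-space if for every decreasing sequence $\{D_n:n\in\omega\}$ of subsets of $X$ with $\bigcap_n D_n=\emptyset$ there is a decreasing sequence $\{V_n:n\in\omega\}$ of open subsets of $X$ with $D_n\subseteq V_n$ for all $n$ and $\bigcap_n V_n=\emptyset$. *)

theory Defs
  imports "HOL-Analysis.Analysis"
begin

definition delta_space :: "'a::topological_space itself \<Rightarrow> bool" where
  "delta_space _ \<longleftrightarrow>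
     (\<forall>D :: nat \<Rightarrow> 'a set. decseq D \<and> (\<Inter>n. D n) = {} \<longrightarrow>
        (\<exists>V :: nat \<Rightarrow> 'a set. decseq V \<and> (\<forall>n. open (V n) \<and> D n \<subseteq> V n) \<and> (\<Inter>n. V n) = {}))"

definition grothendieck :: "'a::real_normed_vector itself \<Rightarrow> bool" where
  "grothendieck _ \<longleftrightarrow>
     (\<forall>(f :: nat \<Rightarrow> ('a \<Rightarrow>\<^sub>L real)) g.
        (\<forall>x. (\<lambda>n. blinfun_apply (f n) x) \<longlonglongrightarrow> blinfun_apply g x) \<longrightarrow>
        (\<forall>\<phi> :: ('a \<Rightarrow>\<^sub>L real) \<Rightarrow>\<^sub>L real. (\<lambda>n. blinfun_apply \<phi> (f n)) \<longlonglongrightarrow> blinfun_apply \<phi> g))"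

end

theory Submission
  imports Defs
begin


lemma apply_bcontfun_sum:
  fixes F :: "nat \<Rightarrow> ('a::topological_space \<Rightarrow>\<^sub>C real)"
  shows "apply_bcontfun (sum F A) t = (\<Sum>k\<in>A. apply_bcontfun (F k) t)"
  by (induction A rule: infinite_finite_induct) auto

lemma not_groth_from_seq:
  fixes p :: "nat \<Rightarrow> 'a::topological_space" and x :: 'a and h :: "nat \<Rightarrow> 'a \<Rightarrow> real"
  assumes cont: "\<And>k. continuous_on UNIV (h k)" and bnd: "\<And>k t. \<bar>h k t\<bar> \<le> 1"
    and disj: "\<And>j k t. j \<noteq> k \<Longrightarrow> h j t = 0 \<or> h k t = 0"
    and hp: "\<And>k j. h k (p j) = (if j = k then 1 else 0)" and hx: "\<And>k. h k x = 0"
    and lim: "p \<longlonglongrightarrow> x"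
  shows "\<not> grothendieck TYPE('a \<Rightarrow>\<^sub>C real)"
proof
  assume G: "grothendieck TYPE('a \<Rightarrow>\<^sub>C real)"
  define H where "H k = Bcontfun (h k)" for k
  have hb: "h k \<in> bcontfun" for k
    by (rule bcontfun_normI[OF cont]) (use bnd in simp)
  have Happ: "apply_bcontfun (H k) = h k" for k
    unfolding H_def using hb by (simp add: Bcontfun_inverse)
  define ev where "ev t = Blinfun (\<lambda>F::'a\<Rightarrow>\<^sub>C real. apply_bcontfun F t)" for t
  have bl_ev: "bounded_linear (\<lambda>F::'a\<Rightarrow>\<^sub>C real. apply_bcontfun F t)" for t
  proof (rule bounded_linear_intro[where K=1])
    show "norm (apply_bcontfun F t) \<le> norm F * 1" for F :: "'a\<Rightarrow>\<^sub>C real"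
      using norm_bounded[of F t] by simp
  qed auto
  have ev_app: "blinfun_apply (ev t) F = apply_bcontfun F t" for t F
    unfolding ev_def using bl_ev by (simp add: bounded_linear_Blinfun_apply)
  define f where "f n = ev (p n) - ev x" for n
  have wstar: "\<forall>F. (\<lambda>n. blinfun_apply (f n) F) \<longlonglongrightarrow> blinfun_apply 0 F"
  proof
    fix F :: "'a\<Rightarrow>\<^sub>C real"
    have "(\<lambda>n. apply_bcontfun F (p n)) \<longlonglongrightarrow> apply_bcontfun F x"
      by (rule continuous_on_tendsto_compose[OF continuous_on_apply_bcontfun[of UNIV] lim]) auto
    then have "(\<lambda>n. apply_bcontfun F (p n) - apply_bcontfun F x) \<longlonglongrightarrow> apply_bcontfun F x - apply_bcontfun F x"
      by (intro tendsto_intros)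
    then show "(\<lambda>n. blinfun_apply (f n) F) \<longlonglongrightarrow> blinfun_apply 0 F"
      by (simp add: f_def ev_app blinfun.diff_left)
  qed
  have partial: "(\<Sum>k<N. \<bar>blinfun_apply \<mu> (H k)\<bar>) \<le> norm \<mu>" for \<mu> :: "('a\<Rightarrow>\<^sub>C real) \<Rightarrow>\<^sub>L real" and N
  proof -
    define c where "c k = sgn (blinfun_apply \<mu> (H k))" for k
    define Gf where "Gf = (\<Sum>k<N. c k *\<^sub>R H k)"
    have c1: "\<bar>c k\<bar> \<le> 1" for k by (simp add: c_def sgn_real_def)
    have sgnab: "\<And>k. c k * blinfun_apply \<mu> (H k) = \<bar>blinfun_apply \<mu> (H k)\<bar>"
      unfolding c_def by (metis abs_sgn mult.commute)
    have "norm Gf \<le> 1"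
    proof (rule norm_bound)
      fix t
      have eq: "apply_bcontfun Gf t = (\<Sum>k<N. c k * h k t)"
        unfolding Gf_def by (simp add: apply_bcontfun_sum Happ)
      show "norm (apply_bcontfun Gf t) \<le> 1"
      proof (cases "\<exists>k0<N. h k0 t \<noteq> 0")
        case True
        then obtain k0 where k0: "k0 < N" "h k0 t \<noteq> 0" by blast
        have "(\<Sum>k<N. c k * h k t) = c k0 * h k0 t + (\<Sum>k\<in>{..<N}-{k0}. c k * h k t)"
          by (rule sum.remove) (use k0 in auto)
        moreover have "(\<Sum>k\<in>{..<N}-{k0}. c k * h k t) = 0"
          by (rule sum.neutral) (use disj k0 in fastforce)
        ultimately have "(\<Sum>k<N. c k * h k t) = c k0 * h k0 t" by simp
        then show ?thesis using eq c1[of k0] bnd[of k0 t]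
          by (simp add: abs_mult mult_le_one)
      next
        case False
        then have "(\<Sum>k<N. c k * h k t) = 0" by (intro sum.neutral) auto
        then show ?thesis using eq by simp
      qed
    qed
    have "blinfun_apply \<mu> Gf = (\<Sum>k<N. \<bar>blinfun_apply \<mu> (H k)\<bar>)"
      unfolding Gf_def using sgnab by (simp add: blinfun.sum_right blinfun.scaleR_right)
    moreover have "blinfun_apply \<mu> Gf \<le> norm \<mu>"
    proof -
      have "blinfun_apply \<mu> Gf \<le> norm (blinfun_apply \<mu> Gf)" by simp
      also have "\<dots> \<le> norm \<mu> * norm Gf" by (rule norm_blinfun)
      also have "\<dots> \<le> norm \<mu> * 1" using \<open>norm Gf \<le> 1\<close> by (intro mult_left_mono) auto
      finally show ?thesis by simp
    qed
    ultimately show ?thesis by simp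
  qed
  have sabs: "summable (\<lambda>k. \<bar>blinfun_apply \<mu> (H k)\<bar>)" for \<mu> :: "('a\<Rightarrow>\<^sub>C real) \<Rightarrow>\<^sub>L real"
    by (rule summableI_nonneg_bounded[where x="norm \<mu>"]) (use partial in auto)
  have sm: "summable (\<lambda>k. blinfun_apply \<mu> (H k))" for \<mu> :: "('a\<Rightarrow>\<^sub>C real) \<Rightarrow>\<^sub>L real"
    by (rule summable_rabs_cancel[OF sabs])
  define \<Phi> where "\<Phi> \<mu> = (\<Sum>k. blinfun_apply \<mu> (H k))" for \<mu> :: "('a\<Rightarrow>\<^sub>C real) \<Rightarrow>\<^sub>L real"
  have blPhi: "bounded_linear \<Phi>"
  proof (rule bounded_linear_intro[where K=1])
    fix \<mu> \<nu> :: "('a\<Rightarrow>\<^sub>C real) \<Rightarrow>\<^sub>L real" and r :: real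
    show "\<Phi> (\<mu> + \<nu>) = \<Phi> \<mu> + \<Phi> \<nu>"
      unfolding \<Phi>_def by (simp add: blinfun.add_left suminf_add[OF sm sm])
    show "\<Phi> (r *\<^sub>R \<mu>) = r *\<^sub>R \<Phi> \<mu>"
      unfolding \<Phi>_def by (simp add: blinfun.scaleR_left suminf_mult[OF sm])
    have "\<bar>\<Phi> \<mu>\<bar> \<le> (\<Sum>k. \<bar>blinfun_apply \<mu> (H k)\<bar>)"
      unfolding \<Phi>_def by (rule summable_rabs[OF sabs])
    also have "\<dots> \<le> norm \<mu>"
      by (rule suminf_le_const[OF sabs partial])
    finally show "norm (\<Phi> \<mu>) \<le> norm \<mu> * 1" by simp
  qed
  define \<phi> where "\<phi> = Blinfun \<Phi>"
  have phi_app: "blinfun_apply \<phi> = \<Phi>"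
    unfolding \<phi>_def using blPhi by (simp add: bounded_linear_Blinfun_apply)
  have one: "\<Phi> (f n) = 1" for n
  proof -
    have "(\<lambda>k. blinfun_apply (f n) (H k)) = (\<lambda>k. if k = n then 1 else 0)"
      by (auto simp: f_def blinfun.diff_left ev_app Happ hp hx)
    moreover have "(\<lambda>k. if k = n then 1 else 0 :: real) sums 1"
      using sums_single[of n "\<lambda>_. 1::real"] by simp
    ultimately show ?thesis unfolding \<Phi>_def by (simp add: sums_iff)
  qed
  from G wstar have "(\<lambda>n. blinfun_apply \<phi> (f n)) \<longlonglongrightarrow> blinfun_apply \<phi> 0"
    unfolding grothendieck_def by blast
  then have "(\<lambda>n. 1::real) \<longlonglongrightarrow> 0"
    using blinfun.zero_right[of \<phi>] by (simp add: phi_app one)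
  then show False by (simp add: LIMSEQ_const_iff)
qed



lemma om_bounded:
  fixes m :: "'b::{wellorder, linorder_topology}"
  assumes unc: "uncountable {..<m}" and cnt: "\<forall>x<m. countable {..<x}"
    and T: "countable T" "T \<subseteq> {..<m}"
  shows "\<exists>\<beta><m. \<forall>t\<in>T. t \<le> \<beta>"
proof (rule ccontr)
  assume "\<not> ?thesis"
  then have "\<forall>\<beta><m. \<exists>t\<in>T. \<beta> < t" by (auto simp: not_le)
  then have "{..<m} \<subseteq> (\<Union>t\<in>T. {..<t})" by auto
  moreover have "countable (\<Union>t\<in>T. {..<t})"
    using T cnt by (intro countable_UN) auto
  ultimately show False using unc countable_subset by blast
qed

lemma om_unc_unbounded:
  fixes m :: "'b::{wellorder, linorder_topology}"
  assumes cnt: "\<forall>x<m. countable {..<x}"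
    and U: "uncountable (C \<inter> {..<m})" and b: "\<beta> < m"
  shows "\<exists>\<gamma>\<in>C. \<beta> < \<gamma> \<and> \<gamma> < m"
proof (rule ccontr)
  assume "\<not> ?thesis"
  then have "C \<inter> {..<m} \<subseteq> {..<\<beta>} \<union> {\<beta>}" by (auto simp: not_less)
  moreover have "countable ({..<\<beta>} \<union> {\<beta>})" using cnt b by auto
  ultimately show False using U countable_subset by blast
qed

lemma om_unbounded_unc:
  fixes m :: "'b::{wellorder, linorder_topology}"
  assumes unc: "uncountable {..<m}" and cnt: "\<forall>x<m. countable {..<x}"
    and ub: "\<forall>\<beta><m. \<exists>\<gamma>\<in>C. \<beta> < \<gamma> \<and> \<gamma> < m"
  shows "uncountable (C \<inter> {..<m})"
proof
  assume c: "countable (C \<inter> {..<m})"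
  obtain \<beta> where "\<beta> < m" "\<forall>t\<in>C \<inter> {..<m}. t \<le> \<beta>"
    using om_bounded[OF unc cnt c] by auto
  with ub show False by force
qed

lemma closed_lub_mem:
  fixes \<delta> :: "'b::linorder_topology"
  assumes "closed C" "T \<subseteq> C" "t0 \<in> T" "\<forall>t\<in>T. t \<le> \<delta>" "\<forall>z. (\<forall>t\<in>T. t \<le> z) \<longrightarrow> \<delta> \<le> z"
  shows "\<delta> \<in> C"
proof (rule ccontr)
  assume nd: "\<delta> \<notin> C"
  have "t0 < \<delta>" using assms nd by (metis order.order_iff_strict subsetD)
  then obtain b where b: "b < \<delta>" "{b<..\<delta>} \<subseteq> -C"
    using open_left[of "-C" \<delta> t0] assms(1) nd by auto
  then obtain t where "t \<in> T" "\<not> t \<le> b" using assms(5) by (meson not_le)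
  then have "t \<in> {b<..\<delta>}" using assms(4) by (auto simp: not_le)
  then show False using b \<open>t \<in> T\<close> assms(2) by auto
qed

lemma club_Inter:
  fixes m :: "'b::{wellorder, linorder_topology}"
  assumes unc: "uncountable {..<m}" and cnt: "\<forall>x<m. countable {..<x}"
    and cl: "\<And>k::nat. closed (C k)" and U: "\<And>k. uncountable (C k \<inter> {..<m})"
  shows "uncountable ((\<Inter>k. C k) \<inter> {..<m})"
proof (rule om_unbounded_unc[OF unc cnt], intro allI impI)
  fix \<beta> assume b: "\<beta> < m"
  define nxt where "nxt j g = (SOME z. z \<in> C (fst (prod_decode j)) \<and> g < z \<and> z < m)" for j g
  define \<gamma> where "\<gamma> = rec_nat \<beta> nxt"
  have g0: "\<gamma> 0 = \<beta>" and gS: "\<gamma> (Suc j) = nxt j (\<gamma> j)" for j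
    by (simp_all add: \<gamma>_def)
  have step: "\<gamma> j < m \<and> \<gamma> (Suc j) \<in> C (fst (prod_decode j)) \<and> \<gamma> j < \<gamma> (Suc j) \<and> \<gamma> (Suc j) < m" for j
  proof (induction j)
    case 0
    have "\<exists>z. z \<in> C (fst (prod_decode 0)) \<and> \<gamma> 0 < z \<and> z < m"
      using om_unc_unbounded[OF cnt U b] g0 by auto
    then show ?case unfolding gS nxt_def using b g0 by (metis (mono_tags, lifting) someI_ex)
  next
    case (Suc j)
    then have "\<gamma> (Suc j) < m" by simp
    then have "\<exists>z. z \<in> C (fst (prod_decode (Suc j))) \<and> \<gamma> (Suc j) < z \<and> z < m"
      using om_unc_unbounded[OF cnt U] by blast
    then show ?case unfolding gS[of "Suc j"] nxt_def using \<open>\<gamma> (Suc j) < m\<close>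
      by (metis (mono_tags, lifting) someI_ex)
  qed
  have mono: "strict_mono \<gamma>" using step by (simp add: strict_mono_Suc_iff)
  have c1: "countable (range \<gamma>)" by simp
  have c2: "range \<gamma> \<subseteq> {..<m}" using step by auto
  obtain \<beta>' where b': "\<beta>' < m" "\<forall>j. \<gamma> j \<le> \<beta>'"
    using om_bounded[OF unc cnt c1 c2] by auto
  define \<delta> where "\<delta> = (LEAST z. \<forall>j. \<gamma> j \<le> z)"
  have dub: "\<forall>j. \<gamma> j \<le> \<delta>" unfolding \<delta>_def using b'(2) by (rule LeastI)
  have dleast: "\<And>z. \<forall>j. \<gamma> j \<le> z \<Longrightarrow> \<delta> \<le> z" unfolding \<delta>_def by (rule Least_le)
  have "\<delta> \<le> \<beta>'" using dleast b' by blast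
  then have dm: "\<delta> < m" using b' by simp
  have db: "\<beta> < \<delta>" using step[of 0] dub g0 by (metis order.strict_trans2)
  have "\<delta> \<in> C k" for k
  proof (rule closed_lub_mem[OF cl])
    let ?T = "{\<gamma> (Suc j) |j. fst (prod_decode j) = k}"
    show "?T \<subseteq> C k" using step by auto
    show "\<gamma> (Suc (prod_encode (k,0))) \<in> ?T" by auto
    show "\<forall>t\<in>?T. t \<le> \<delta>" using dub by auto
    show "\<forall>z. (\<forall>t\<in>?T. t \<le> z) \<longrightarrow> \<delta> \<le> z"
    proof (intro allI impI dleast)
      fix z j assume h: "\<forall>t\<in>?T. t \<le> z"
      have "\<gamma> (Suc (prod_encode (k,j))) \<le> z" using h by force
      moreover have "\<gamma> j \<le> \<gamma> (Suc (prod_encode (k,j)))"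
        using mono le_prod_encode_2[of j k] by (simp add: strict_mono_less_eq)
      ultimately show "\<gamma> j \<le> z" by simp
    qed
  qed
  then show "\<exists>\<gamma>\<in>\<Inter> (range C). \<beta> < \<gamma> \<and> \<gamma> < m" using db dm by blast
qed

lemma omega1_not_delta:
  fixes m :: "'b::{wellorder, linorder_topology}"
  assumes unc: "uncountable {..<m}" and cnt: "\<forall>x<m. countable {..<x}"
  shows "\<not> delta_space TYPE('b)"
proof
  assume delta: "delta_space TYPE('b)"
  define stat where "stat S \<longleftrightarrow> (\<forall>C. closed C \<and> uncountable (C \<inter> {..<m}) \<longrightarrow> S \<inter> C \<noteq> {})" for S
  define A where "A k \<xi> = {\<alpha>. \<alpha> < m \<and> \<xi> < \<alpha> \<and> to_nat_on {..<\<alpha>} \<xi> = k}" for k :: nat and \<xi>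
  have exk: "\<exists>k. stat (A k \<xi>)" if xi: "\<xi> < m" for \<xi>
  proof (rule ccontr)
    assume "\<nexists>k. stat (A k \<xi>)"
    then have "\<forall>k. \<exists>C. closed C \<and> uncountable (C \<inter> {..<m}) \<and> A k \<xi> \<inter> C = {}"
      unfolding stat_def by blast
    then obtain C where C: "\<And>k. closed (C k)" "\<And>k. uncountable (C k \<inter> {..<m})"
      "\<And>k. A k \<xi> \<inter> C k = {}" by metis
    have ui: "uncountable ((\<Inter>k. C k) \<inter> {..<m})"
      using club_Inter[OF unc cnt C(1,2)] .
    then obtain \<gamma> where g: "\<gamma> \<in> (\<Inter>k. C k)" "\<xi> < \<gamma>" "\<gamma> < m"
      using om_unc_unbounded[OF cnt ui xi] by blast
    then have "\<gamma> \<in> A (to_nat_on {..<\<gamma>} \<xi>) \<xi>" unfolding A_def by auto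
    moreover have "\<gamma> \<in> C (to_nat_on {..<\<gamma>} \<xi>)" using g by auto
    ultimately show False using C(3) by blast
  qed
  define kf where "kf \<xi> = (SOME k. stat (A k \<xi>))" for \<xi>
  have kf: "stat (A (kf \<xi>) \<xi>)" if "\<xi> < m" for \<xi>
    unfolding kf_def using exk[OF that] by (rule someI_ex)
  have "\<exists>k0. uncountable {\<xi>. \<xi> < m \<and> kf \<xi> = k0}"
  proof (rule ccontr)
    assume "\<nexists>k0. uncountable {\<xi>. \<xi> < m \<and> kf \<xi> = k0}"
    then have "countable (\<Union>k0. {\<xi>. \<xi> < m \<and> kf \<xi> = k0})" by auto
    moreover have "{..<m} \<subseteq> (\<Union>k0. {\<xi>. \<xi> < m \<and> kf \<xi> = k0})" by auto
    ultimately show False using unc countable_subset by blast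
  qed
  then obtain k0 where k0: "uncountable {\<xi>. \<xi> < m \<and> kf \<xi> = k0}" by blast
  then have "infinite {\<xi>. \<xi> < m \<and> kf \<xi> = k0}" using countable_finite by blast
  then obtain r :: "nat \<Rightarrow> 'b" where r: "inj r" "range r \<subseteq> {\<xi>. \<xi> < m \<and> kf \<xi> = k0}"
    using infinite_countable_subset by blast
  define S where "S j = A k0 (r j)" for j
  have statS: "stat (S j)" for j
  proof -
    have "r j < m" "kf (r j) = k0" using r(2) by auto
    then show ?thesis using kf[of "r j"] unfolding S_def by simp
  qed
  have disjS: "S i \<inter> S j = {}" if "i \<noteq> j" for i j
  proof (rule ccontr)
    assume "S i \<inter> S j \<noteq> {}"
    then obtain \<alpha> where a: "\<alpha> < m" "r i < \<alpha>" "r j < \<alpha>"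
      "to_nat_on {..<\<alpha>} (r i) = k0" "to_nat_on {..<\<alpha>} (r j) = k0"
      unfolding S_def A_def by auto
    have "inj_on (to_nat_on {..<\<alpha>}) {..<\<alpha>}" using cnt a(1) by auto
    then have "r i = r j" using a by (auto dest: inj_onD)
    then show False using r(1) that by (auto dest: injD)
  qed
  define D where "D n = (\<Union>j\<in>{n..}. S j)" for n
  have dD: "decseq D" by (rule decseq_SucI) (unfold D_def, rule UN_mono, auto)
  have iD: "(\<Inter>n. D n) = {}"
  proof (rule ccontr)
    assume "(\<Inter>n. D n) \<noteq> {}"
    then obtain \<alpha> where "\<forall>n. \<alpha> \<in> D n" by blast
    then obtain j where j: "\<alpha> \<in> S j" unfolding D_def by blast
    obtain j' where "j' \<ge> Suc j" "\<alpha> \<in> S j'" using \<open>\<forall>n. \<alpha> \<in> D n\<close> unfolding D_def by blast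
    then show False using disjS[of j j'] j by auto
  qed
  have "\<exists>V :: nat \<Rightarrow> 'b set. decseq V \<and> (\<forall>n. open (V n) \<and> D n \<subseteq> V n) \<and> (\<Inter>n. V n) = {}"
    using delta[unfolded delta_space_def, rule_format, OF conjI[OF dD iD]] .
  then obtain V where V: "decseq V" "\<And>n. open (V n)" "\<And>n. D n \<subseteq> V n" "(\<Inter>n. V n) = {}"
    by blast
  have "\<exists>N. uncountable ((- V N) \<inter> {..<m})"
  proof (rule ccontr)
    assume "\<nexists>N. uncountable ((- V N) \<inter> {..<m})"
    then have "countable (\<Union>N. (- V N) \<inter> {..<m})" by (intro countable_UN) auto
    moreover have "{..<m} \<subseteq> (\<Union>N. (- V N) \<inter> {..<m})" using V(4) by auto
    ultimately show False using unc countable_subset by blast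
  qed
  then obtain N where N: "uncountable ((- V N) \<inter> {..<m})" by blast
  have "S N \<inter> (- V N) \<noteq> {}" using statS[of N] N V(2)[of N] unfolding stat_def by auto
  moreover have "S N \<subseteq> V N" using V(3)[of N] unfolding D_def by auto
  ultimately show False by blast
qed



lemma clopen_indicator_cont:
  assumes "open S" "closed S"
  shows "continuous_on UNIV (\<lambda>t. if t \<in> S then 1 else (0::real))"
proof -
  have "continuous_on (S \<union> -S) (\<lambda>t. if t \<in> S then 1 else (0::real))"
    by (rule continuous_on_cases) (use assms in \<open>auto intro: continuous_on_const\<close>)
  then show ?thesis by simp
qed

lemma omega1_not_groth:
  fixes m :: "'b::{wellorder, linorder_topology}"
  assumes top: "\<forall>x. x \<le> m" and unc: "uncountable {..<m}" and cnt: "\<forall>x<m. countable {..<x}"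
  shows "\<not> grothendieck TYPE('b \<Rightarrow>\<^sub>C real)"
proof -
  define a where "a = rec_nat (LEAST z::'b. True) (\<lambda>_ y. LEAST z. y < z)"
  have a0: "a 0 = (LEAST z::'b. True)" and aS: "a (Suc n) = (LEAST z. a n < z)" for n
    by (simp_all add: a_def)
  have am: "a n < m" for n
  proof (induction n)
    case 0
    obtain w where "w < m" using unc by (metis ex_in_conv finite.emptyI lessThan_iff uncountable_infinite)
    moreover have "(LEAST z::'b. True) \<le> w" by (rule Least_le) simp
    ultimately show ?case unfolding a0 by simp
  next
    case (Suc n)
    have le: "a (Suc n) \<le> m" unfolding aS using Suc by (rule Least_le)
    have lt: "a n < a (Suc n)" unfolding aS using Suc by (rule LeastI)
    show ?case
    proof (rule ccontr)
      assume "\<not> a (Suc n) < m"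
      then have eq: "a (Suc n) = m" using le by simp
      have "{..<m} \<subseteq> {..<a n} \<union> {a n}"
      proof
        fix z assume "z \<in> {..<m}"
        then have "z < a (Suc n)" using eq by simp
        then have "\<not> a n < z" unfolding aS using not_less_Least by blast
        then show "z \<in> {..<a n} \<union> {a n}" by auto
      qed
      moreover have "countable ({..<a n} \<union> {a n})" using cnt Suc by auto
      ultimately show False using unc countable_subset by blast
    qed
  qed
  have alt: "a n < a (Suc n)" for n unfolding aS by (rule LeastI[of _ m]) (use am in simp)
  have between: "\<not> (a n < z \<and> z < a (Suc n))" for n z
    unfolding aS using not_less_Least by blast
  have smono: "strict_mono a" using alt by (simp add: strict_mono_Suc_iff)
  define \<omega> where "\<omega> = (LEAST z. \<forall>n. a n \<le> z)"
  have wub: "\<forall>n. a n \<le> \<omega>" unfolding \<omega>_def by (rule LeastI[of _ m]) (use top in simp)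
  have wl: "\<And>z. \<forall>n. a n \<le> z \<Longrightarrow> \<omega> \<le> z" unfolding \<omega>_def by (rule Least_le)
  have alw: "a n < \<omega>" for n using wub[rule_format, of "Suc n"] alt[of n] by simp
  have lim: "a \<longlonglongrightarrow> \<omega>"
  proof (rule topological_tendstoI)
    fix S assume S: "open S" "\<omega> \<in> S"
    obtain b where b: "b < \<omega>" "{b<..\<omega>} \<subseteq> S" using open_left[OF S alw[of 0]] by blast
    have "\<not> (\<forall>n. a n \<le> b)"
    proof
      assume "\<forall>n. a n \<le> b"
      then have "\<omega> \<le> b" by (rule wl)
      then show False using b(1) by simp
    qed
    then obtain k where "\<not> a k \<le> b" by blast
    then have "b < a k" by simp
    have "a n \<in> S" if "n \<ge> k" for n
    proof -
      have "a k \<le> a n" using smono that by (simp add: strict_mono_less_eq)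
      then have "a n \<in> {b<..\<omega>}" using \<open>b < a k\<close> alw[of n] by auto
      then show ?thesis using b(2) by blast
    qed
    then have "\<forall>n\<ge>k. a n \<in> S" by blast
    then show "eventually (\<lambda>n. a n \<in> S) sequentially" by (auto simp: eventually_sequentially)
  qed
  have single_open: "open {a k}" for k
  proof (cases k)
    case 0
    have "{a 0} = {..< a 1}"
    proof (rule set_eqI)
      fix z
      show "z \<in> {a 0} \<longleftrightarrow> z \<in> {..< a 1}"
      proof
        assume "z \<in> {..< a 1}"
        then have z: "z < a 1" by auto
        have "a 0 \<le> z" unfolding a0 by (rule Least_le) simp
        moreover have "\<not> a 0 < z" using between[of 0 z] z by auto
        ultimately show "z \<in> {a 0}" by simp
      qed (use alt[of 0] in auto)
    qed
    then show ?thesis using 0 by simp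
  next
    case (Suc j)
    have "{a (Suc j)} = {a j <..< a (Suc (Suc j))}"
    proof (rule set_eqI)
      fix z
      show "z \<in> {a (Suc j)} \<longleftrightarrow> z \<in> {a j <..< a (Suc (Suc j))}"
      proof
        assume "z \<in> {a j <..< a (Suc (Suc j))}"
        then have z: "a j < z" "z < a (Suc (Suc j))" by auto
        have "\<not> z < a (Suc j)" using between[of j z] z by auto
        moreover have "\<not> a (Suc j) < z" using between[of "Suc j" z] z by auto
        ultimately show "z \<in> {a (Suc j)}" by simp
      qed (use alt[of j] alt[of "Suc j"] in auto)
    qed
    then show ?thesis using Suc by simp
  qed
  define h where "h k t = (if t \<in> {a k} then 1 else (0::real))" for k t
  show ?thesis
  proof (rule not_groth_from_seq[where p=a and x=\<omega> and h=h])
    show "continuous_on UNIV (h k)" for k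
      unfolding h_def by (rule clopen_indicator_cont[OF single_open]) simp
    show "\<bar>h k t\<bar> \<le> 1" for k t by (simp add: h_def)
    show "h j t = 0 \<or> h k t = 0" if "j \<noteq> k" for j k t
      using that smono by (auto simp: h_def strict_mono_eq)
    show "h k (a j) = (if j = k then 1 else 0)" for k j
      using smono by (auto simp: h_def strict_mono_eq)
    show "h k \<omega> = 0" for k using alw[of k] by (auto simp: h_def)
    show "a \<longlonglongrightarrow> \<omega>" by (rule lim)
  qed
qed



lemma Hausdorff_space_euclidean_t2: "Hausdorff_space (euclidean :: 'a::t2_space topology)"
  unfolding Hausdorff_space_def disjnt_def using hausdorff by (simp add: open_openin[symmetric]) blast

lemma normal_space_compact_t2:
  assumes "compact (UNIV :: 'a::t2_space set)"
  shows "normal_space (euclidean :: 'a topology)"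
  by (rule compact_Hausdorff_or_regular_imp_normal_space)
     (use assms Hausdorff_space_euclidean_t2 in \<open>auto simp: compact_space_def\<close>)

lemma urysohn_bump:
  fixes U :: "'a::t2_space set"
  assumes "compact (UNIV :: 'a set)" "open U" "q \<in> U"
  obtains g :: "'a \<Rightarrow> real" where "continuous_on UNIV g" "\<And>t. 0 \<le> g t \<and> g t \<le> 1"
    "g q = 1" "\<And>t. t \<notin> U \<Longrightarrow> g t = 0"
proof -
  have "closedin euclidean (-U)" using assms(2) by (simp add: closed_closedin[symmetric] closed_Compl)
  moreover have "closedin euclidean {q}" by (simp add: closed_closedin[symmetric])
  moreover have "disjnt (-U) {q}" using assms(3) by (simp add: disjnt_def)
  ultimately obtain g where g: "continuous_map euclidean (top_of_set {0..1::real}) g"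
    "g ` (-U) \<subseteq> {0}" "g ` {q} \<subseteq> {1}"
    using Urysohn_lemma[OF normal_space_compact_t2[OF assms(1)], of "-U" "{q}" 0 1] by auto
  have "continuous_on UNIV g" "\<And>t. g t \<in> {0..1}"
    using g(1) by (auto simp: continuous_map_in_subtopology)
  then show ?thesis using that g(2,3) by auto
qed

lemma seq_to_not_groth:
  fixes p :: "nat \<Rightarrow> 'a::t2_space" and x :: 'a
  assumes cpt: "compact (UNIV :: 'a set)" and px: "\<And>n. p n \<noteq> x" and lim: "p \<longlonglongrightarrow> x"
  shows "\<not> grothendieck TYPE('a \<Rightarrow>\<^sub>C real)"
proof -
  define Q where "Q = (\<lambda>(U::'a set, W::'a set, i::nat). open U \<and> open W \<and> U \<inter> W = {} \<and> x \<in> W \<and> p i \<in> U)"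
  have step: "\<exists>U' W' i'. Q (U', W', i') \<and> U' \<subseteq> W \<and> W' \<subseteq> W \<and> i < i'"
    if W: "open W" "x \<in> W" for W i
  proof -
    have "eventually (\<lambda>n. p n \<in> W) sequentially" using lim W by (rule topological_tendstoD)
    then obtain N where N: "\<And>n. n \<ge> N \<Longrightarrow> p n \<in> W" by (auto simp: eventually_sequentially)
    define n where "n = max N (Suc i)"
    have n: "p n \<in> W" "i < n" using N by (auto simp: n_def)
    obtain A B where AB: "open A" "open B" "p n \<in> A" "x \<in> B" "A \<inter> B = {}"
      using hausdorff[OF px[of n]] by blast
    show ?thesis
      by (rule exI[of _ "A \<inter> W"], rule exI[of _ "B \<inter> W"], rule exI[of _ n])
         (use AB W n in \<open>auto simp: Q_def\<close>)
  qed
  have "\<exists>f. \<forall>n. (\<lambda>_ s. Q s) n (f n) \<and> (\<lambda>_ s s'. fst s' \<subseteq> fst (snd s) \<and> fst (snd s') \<subseteq> fst (snd s) \<and> snd (snd s) < snd (snd s')) n (f n) (f (Suc n))"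
  proof (rule dependent_nat_choice)
    show "\<exists>s. Q s" using step[of UNIV 0] by blast
    show "\<exists>s'. Q s' \<and> fst s' \<subseteq> fst (snd s) \<and> fst (snd s') \<subseteq> fst (snd s) \<and> snd (snd s) < snd (snd s')"
      if "Q s" for s n
    proof -
      obtain U W i where s: "s = (U, W, i)" by (cases s) auto
      then have "open W" "x \<in> W" using that by (auto simp: Q_def)
      then show ?thesis using step[of W i] s by auto
    qed
  qed
  then obtain f where f: "\<And>n. Q (f n)" "\<And>n. fst (f (Suc n)) \<subseteq> fst (snd (f n))"
    "\<And>n. fst (snd (f (Suc n))) \<subseteq> fst (snd (f n))" "\<And>n. snd (snd (f n)) < snd (snd (f (Suc n)))"
    by blast
  define U where "U n = fst (f n)" for n
  define W where "W n = fst (snd (f n))" for n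
  define r where "r n = snd (snd (f n))" for n
  have Q': "open (U n)" "open (W n)" "U n \<inter> W n = {}" "x \<in> W n" "p (r n) \<in> U n" for n
    using f(1)[of n] by (auto simp: Q_def U_def W_def r_def split: prod.splits)
  have decW: "decseq W" using f(3) by (intro decseq_SucI) (simp add: W_def)
  have smr: "strict_mono r" using f(4) by (simp add: strict_mono_Suc_iff r_def)
  have disjU: "U j \<inter> U k = {}" if jk: "j < k" for j k
  proof -
    obtain k' where k': "k = Suc k'" using jk by (cases k) auto
    have "U k \<subseteq> W k'" using f(2)[of k'] by (simp add: U_def W_def k')
    also have "W k' \<subseteq> W j" using decW jk k' by (simp add: decseq_def)
    finally show ?thesis using Q'(3)[of j] by blast
  qed
  have disjU': "U j \<inter> U k = {}" if "j \<noteq> k" for j k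
    using disjU[of j k] disjU[of k j] that by (cases "j < k") auto
  have "\<forall>k. \<exists>g :: 'a \<Rightarrow> real. continuous_on UNIV g \<and> (\<forall>t. 0 \<le> g t \<and> g t \<le> 1) \<and>
      g (p (r k)) = 1 \<and> (\<forall>t. t \<notin> U k \<longrightarrow> g t = 0)"
  proof
    fix k
    obtain g :: "'a \<Rightarrow> real" where "continuous_on UNIV g" "\<And>t. 0 \<le> g t \<and> g t \<le> 1"
      "g (p (r k)) = 1" "\<And>t. t \<notin> U k \<Longrightarrow> g t = 0"
      using urysohn_bump[OF cpt Q'(1) Q'(5)] by blast
    then show "\<exists>g :: 'a \<Rightarrow> real. continuous_on UNIV g \<and> (\<forall>t. 0 \<le> g t \<and> g t \<le> 1) \<and>
      g (p (r k)) = 1 \<and> (\<forall>t. t \<notin> U k \<longrightarrow> g t = 0)" by blast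
  qed
  then obtain g :: "nat \<Rightarrow> 'a \<Rightarrow> real" where g: "\<And>k. continuous_on UNIV (g k)"
    "\<And>k t. 0 \<le> g k t \<and> g k t \<le> 1" "\<And>k. g k (p (r k)) = 1" "\<And>k t. t \<notin> U k \<Longrightarrow> g k t = 0"
    by metis
  show ?thesis
  proof (rule not_groth_from_seq[where p="p \<circ> r" and x=x and h=g])
    show "continuous_on UNIV (g k)" for k by (rule g(1))
    show "\<bar>g k t\<bar> \<le> 1" for k t using g(2)[of k t] by simp
    show "g j t = 0 \<or> g k t = 0" if "j \<noteq> k" for j k t
      using disjU'[OF that] g(4) by blast
    show "g k ((p \<circ> r) j) = (if j = k then 1 else 0)" for k j
    proof (cases "j = k")
      case False
      then have "p (r j) \<notin> U k" using disjU'[OF False] Q'(5)[of j] by blast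
      then show ?thesis using g(4) False by simp
    qed (simp add: g(3))
    show "g k x = 0" for k using Q'(3,4)[of k] g(4) by blast
    show "(p \<circ> r) \<longlonglongrightarrow> x" using LIMSEQ_subseq_LIMSEQ[OF lim smr] .
  qed
qed



lemma compact_isolated_finite:
  assumes "compact S" "\<And>y. y \<in> S \<Longrightarrow> open {y}"
  shows "finite S"
proof -
  obtain C' where "C' \<subseteq> S" "finite C'" "S \<subseteq> (\<Union>c\<in>C'. {c})"
    using compactE_image[OF assms(1), of S "\<lambda>y. {y}"] assms(2) by blast
  then show ?thesis by (metis UN_singleton finite_subset)
qed

lemma Hausdorff_space_euclidean_t2': "Hausdorff_space (euclidean :: 'a::t2_space topology)"
  unfolding Hausdorff_space_def disjnt_def using hausdorff by (simp add: open_openin[symmetric]) blast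

lemma regular_t2_compact:
  fixes U :: "'a::t2_space set"
  assumes cpt: "compact (UNIV :: 'a set)" and "open U" "x \<in> U"
  obtains A where "open A" "x \<in> A" "closure A \<subseteq> U"
proof -
  have reg: "regular_space (euclidean :: 'a topology)"
    by (rule compact_Hausdorff_imp_regular_space)
       (use cpt Hausdorff_space_euclidean_t2' in \<open>auto simp: compact_space_def\<close>)
  have cl: "closedin euclidean (-U)" using assms(2) by (simp add: closed_closedin[symmetric] closed_Compl)
  have xin: "x \<in> topspace euclidean - (-U)" using assms(3) by simp
  have "\<exists>A B. openin euclidean A \<and> openin euclidean B \<and> x \<in> A \<and> -U \<subseteq> B \<and> disjnt A B"
    using reg[unfolded regular_space_def, rule_format, OF conjI[OF cl xin]] .
  then obtain A B where AB: "openin euclidean A" "openin euclidean B" "x \<in> A" "-U \<subseteq> B" "disjnt A B"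
    by blast
  have "closure A \<subseteq> -B"
    by (rule closure_minimal) (use AB in \<open>auto simp: disjnt_def\<close>)
  then have cU: "closure A \<subseteq> U" using AB(4) by blast
  have "open A" using AB(1) by simp
  then show ?thesis using that AB(3) cU by blast
qed

lemma scattered_seq:
  assumes cpt: "compact (UNIV :: 'a::t2_space set)" and inf: "infinite (UNIV :: 'a set)"
    and scat: "\<And>P::'a set. closed P \<Longrightarrow> P \<noteq> {} \<Longrightarrow> \<exists>x\<in>P. \<exists>U. open U \<and> U \<inter> P = {x}"
  shows "\<exists>(p::nat \<Rightarrow> 'a) x. (\<forall>n. p n \<noteq> x) \<and> p \<longlonglongrightarrow> x"
proof -
  define X' where "X' = {x::'a. \<not> open {x}}"
  have "open (-X')"
  proof -
    have "-X' = (\<Union>x\<in>-X'. {x})" by auto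
    moreover have "open (\<Union>x\<in>-X'. {x})" by (rule open_UN) (auto simp: X'_def)
    ultimately show ?thesis by simp
  qed
  then have clX': "closed X'" by (simp add: closed_open)
  have "X' \<noteq> {}"
  proof
    assume "X' = {}"
    then have "finite (UNIV :: 'a set)"
      using compact_isolated_finite[OF cpt] by (auto simp: X'_def)
    then show False using inf by simp
  qed
  then obtain x U where xU: "x \<in> X'" "open U" "U \<inter> X' = {x}"
    using scat[OF clX'] by blast
  obtain A where A: "open A" "x \<in> A" "closure A \<subseteq> U"
    using regular_t2_compact[OF cpt xU(2)] xU(3) by blast
  have "infinite (A - {x})"
  proof
    assume "finite (A - {x})"
    then have "open (A - (A - {x}))" using A(1) by (intro open_Diff finite_imp_closed)
    moreover have "A - (A - {x}) = {x}" using A(2) by auto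
    ultimately show False using xU(1) by (simp add: X'_def)
  qed
  then obtain p :: "nat \<Rightarrow> 'a" where p: "inj p" "range p \<subseteq> A - {x}"
    using infinite_countable_subset by blast
  have plim: "p \<longlonglongrightarrow> x"
  proof (rule topological_tendstoI)
    fix S assume S: "open S" "x \<in> S"
    have "compact (UNIV \<inter> (closure A - S))"
      using cpt S(1) by (intro compact_Int_closed) auto
    moreover have "open {y}" if "y \<in> UNIV \<inter> (closure A - S)" for y
    proof -
      have "y \<in> U" "y \<noteq> x" using that A(3) S(2) by auto
      then have "y \<notin> X'" using xU(3) by auto
      then show ?thesis by (simp add: X'_def)
    qed
    ultimately have fin: "finite (closure A - S)"
      using compact_isolated_finite by fastforce
    have "{n. \<not> p n \<in> S} \<subseteq> p -` (closure A - S)"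
      using p(2) closure_subset[of A] by auto
    then have "finite {n. \<not> p n \<in> S}"
      using finite_vimageI[OF fin p(1)] finite_subset by blast
    then have "eventually (\<lambda>n. p n \<in> S) cofinite" by (simp add: eventually_cofinite)
    then show "eventually (\<lambda>n. p n \<in> S) sequentially" by (simp add: cofinite_eq_sequentially)
  qed
  have pne: "\<forall>n. p n \<noteq> x" using p(2) by auto
  show ?thesis by (rule exI[of _ p], rule exI[of _ x], rule conjI[OF pne plim])
qed



definition CY :: "(nat \<Rightarrow> real) set" where "CY = {y. \<forall>n. y n \<in> {0,1}}"
definition CD :: "nat \<Rightarrow> (nat \<Rightarrow> real) set" where
  "CD n = {y \<in> CY. (\<exists>N. \<forall>k\<ge>N. y k = 0) \<and> (\<exists>k\<ge>n. y k = 1)}"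

lemma CY_closed: "closed CY"
proof -
  have "CY = (\<Inter>n. (\<lambda>y. y n) -` {0,1})" by (auto simp: CY_def)
  moreover have "closed ((\<lambda>y::nat\<Rightarrow>real. y n) -` {0,1})" for n
    by (rule closed_vimage) (auto intro: continuous_on_product_coordinates)
  moreover have "closed (\<Inter>n. (\<lambda>y::nat\<Rightarrow>real. y n) -` {0,1})"
    by (rule closed_INT) (use calculation(2) in blast)
  ultimately show ?thesis by simp
qed

lemma CD_dense:
  assumes "y \<in> CY" shows "y \<in> closure (CD n)"
proof (unfold closure_approachable, intro allI impI)
  fix e :: real assume e: "e > 0"
  obtain N where N: "(1/2::real)^N < e" using real_arch_pow_inv[OF e, of "1/2"] by auto
  define M where "M = n + Suc (Max (from_nat ` {..N} :: nat set))"
  have fM: "from_nat i < M" if "i \<le> N" for i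
  proof -
    have "from_nat i \<le> Max (from_nat ` {..N} :: nat set)" using that by (intro Max_ge) auto
    then show ?thesis by (simp add: M_def)
  qed
  define z where "z k = (if k < M then y k else if k = M then 1 else (0::real))" for k
  have "z \<in> CY" using assms by (auto simp: CY_def z_def)
  moreover have "\<forall>k\<ge>Suc M. z k = 0" by (auto simp: z_def)
  moreover have "M \<ge> n" "z M = 1" by (auto simp: z_def M_def)
  ultimately have "z \<in> CD n" unfolding CD_def by blast
  moreover have "dist z y < e"
  proof -
    have "{dist (z (from_nat i)) (y (from_nat i)) |i. i \<le> N} = {0}"
    proof (rule set_eqI, rule iffI)
      fix v assume "v \<in> {dist (z (from_nat i)) (y (from_nat i)) |i. i \<le> N}"
      then obtain i where "i \<le> N" "v = dist (z (from_nat i)) (y (from_nat i))" by blast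
      then show "v \<in> {0}" using fM[of i] by (simp add: z_def)
    next
      fix v assume "v \<in> {0::real}"
      then have "v = dist (z (from_nat 0)) (y (from_nat 0))" using fM[of 0] by (simp add: z_def)
      then show "v \<in> {dist (z (from_nat i)) (y (from_nat i)) |i. i \<le> N}" by blast
    qed
    then have "dist z y \<le> 2 * 0 + (1/2)^N"
      using dist_fun_le_dist_first_terms[of z y N] by simp
    then show ?thesis using N by simp
  qed
  ultimately show "\<exists>z\<in>CD n. dist z y < e" by blast
qed

lemma CD_dec: "decseq CD"
  unfolding CD_def by (rule decseq_SucI) (auto intro: Suc_leD)

lemma CD_Inter: "(\<Inter>n. CD n) = {}"
proof (rule ccontr)
  assume "(\<Inter>n. CD n) \<noteq> {}"
  then obtain y where y: "\<forall>n. y \<in> CD n" by blast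
  then obtain N where N: "\<forall>k\<ge>N. y k = 0" unfolding CD_def by blast
  obtain k where "k \<ge> N" "y k = 1" using y[rule_format, of N] unfolding CD_def by blast
  then show False using N by auto
qed

lemma CD_sub: "CD n \<subseteq> CY" unfolding CD_def by auto



lemma delta_scattered:
  fixes P :: "'a::t2_space set"
  assumes cpt: "compact (UNIV :: 'a set)" and delta: "delta_space TYPE('a)"
    and clP: "closed P" and ne: "P \<noteq> {}"
  shows "\<exists>x\<in>P. \<exists>U. open U \<and> U \<inter> P = {x}"
proof (rule ccontr)
  assume "\<not> ?thesis"
  then have perf: "\<And>x U. x \<in> P \<Longrightarrow> open U \<Longrightarrow> U \<inter> P \<noteq> {x}" by blast
  define goodp where "goodp U p \<longleftrightarrow> open (fst p) \<and> open (snd p) \<and> fst p \<inter> P \<noteq> {} \<and> snd p \<inter> P \<noteq> {}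
      \<and> closure (fst p) \<subseteq> U \<and> closure (snd p) \<subseteq> U \<and> closure (fst p) \<inter> closure (snd p) = {}"
    for U :: "'a set" and p :: "'a set \<times> 'a set"
  have split: "\<exists>p. goodp U p" if U: "open U" "U \<inter> P \<noteq> {}" for U
  proof -
    obtain a where a: "a \<in> U \<inter> P" using U by blast
    have "U \<inter> P \<noteq> {a}" using perf[of a U] a U by blast
    then obtain b where b: "b \<in> U \<inter> P" "b \<noteq> a" using a by blast
    obtain A B where AB: "open A" "open B" "a \<in> A" "b \<in> B" "A \<inter> B = {}"
      using hausdorff[of a b] b(2) by metis
    obtain A' where A': "open A'" "a \<in> A'" "closure A' \<subseteq> A \<inter> U"
      using regular_t2_compact[OF cpt, of "A \<inter> U" a] AB U a by blast
    obtain B' where B': "open B'" "b \<in> B'" "closure B' \<subseteq> B \<inter> U"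
      using regular_t2_compact[OF cpt, of "B \<inter> U" b] AB U b by blast
    have "goodp U (A', B')"
      unfolding goodp_def using A' B' AB a b by auto
    then show ?thesis by blast
  qed
  define sp where "sp U = (SOME p. goodp U p)" for U
  have sp: "goodp U (sp U)" if "open U" "U \<inter> P \<noteq> {}" for U
    unfolding sp_def using split[OF that] by (rule someI_ex)
  define Og where "Og = rec_list (UNIV :: 'a set) (\<lambda>b s Os. if b then fst (sp Os) else snd (sp Os))"
  have O_Nil: "Og [] = UNIV" and O_Cons: "Og (b # s) = (if b then fst (sp (Og s)) else snd (sp (Og s)))" for b s
    by (simp_all add: Og_def)
  have good: "open (Og s) \<and> Og s \<inter> P \<noteq> {}" for s
  proof (induction s)
    case Nil then show ?case using ne by (simp add: O_Nil)
  next
    case (Cons b s)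
    then have "goodp (Og s) (sp (Og s))" using sp by blast
    then show ?case by (cases b) (auto simp: O_Cons goodp_def)
  qed
  have gp: "goodp (Og s) (sp (Og s))" for s using sp good by blast
  have sub: "closure (Og (b # s)) \<subseteq> Og s" for b s
    using gp[of s] by (cases b) (auto simp: O_Cons goodp_def)
  have sub': "closure (Og (b # s)) \<subseteq> closure (Og s)" for b s
    using sub closure_subset by blast
  have disj2: "closure (Og (True # s)) \<inter> closure (Og (False # s)) = {}" for s
    using gp[of s] by (simp add: O_Cons goodp_def)
  have disj: "closure (Og s) \<inter> closure (Og t) = {}" if "length s = length t" "s \<noteq> t" for s t
    using that
  proof (induction s arbitrary: t)
    case Nil then show ?case by simp
  next
    case (Cons b s)
    then obtain c t' where t: "t = c # t'" "length s = length t'" by (cases t) auto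
    show ?case
    proof (cases "s = t'")
      case True
      then have "b \<noteq> c" using Cons.prems t by simp
      then show ?thesis using disj2[of s] True t by (cases b; cases c) auto
    next
      case False
      then have "closure (Og s) \<inter> closure (Og t') = {}" using Cons.IH t by blast
      then show ?thesis using sub'[of b s] sub'[of c t'] t by blast
    qed
  qed
  have fin: "finite {s::bool list. length s = n}" for n
    using finite_lists_length_eq[of "UNIV::bool set" n] by simp
  define K where "K = P \<inter> (\<Inter>n. \<Union>s\<in>{s. length s = n}. closure (Og s))"
  have clK: "closed K"
    unfolding K_def using clP fin by (intro closed_Int closed_INT closed_UN) auto
  define A where "A n = (\<Union>s\<in>{s. length s = n}. closure (Og (True # s)))" for n
  define B where "B n = (\<Union>s\<in>{s. length s = n}. closure (Og (False # s)))" for n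
  have clA: "closed (A n)" for n unfolding A_def using fin by (intro closed_UN) auto
  have clB: "closed (B n)" for n unfolding B_def using fin by (intro closed_UN) auto
  have AB: "A n \<inter> B n = {}" for n
  proof -
    have "closure (Og (True # s)) \<inter> closure (Og (False # t)) = {}" if "length s = n" "length t = n" for s t
      using disj[of "True # s" "False # t"] that by simp
    then show ?thesis unfolding A_def B_def by blast
  qed
  have KAB: "K \<subseteq> A n \<union> B n" for n
  proof
    fix x assume "x \<in> K"
    then obtain s where s: "length s = Suc n" "x \<in> closure (Og s)" unfolding K_def by blast
    then obtain b s' where "s = b # s'" "length s' = n" by (auto simp: length_Suc_conv)
    then show "x \<in> A n \<union> B n" using s unfolding A_def B_def by (cases b) auto
  qed
  define g where "g x = (\<lambda>n. if x \<in> A n then 1 else (0::real))" for x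
  have contg: "continuous_on K g"
  proof (unfold g_def, rule continuous_on_coordinatewise_then_product)
    fix n
    have "continuous_on (A n \<union> B n) (\<lambda>x. if x \<in> A n then 1 else (0::real))"
      by (rule continuous_on_cases[OF clA clB]) (use AB in \<open>auto intro: continuous_on_const\<close>)
    then show "continuous_on K (\<lambda>x. if x \<in> A n then 1 else (0::real))"
      by (rule continuous_on_subset) (rule KAB)
  qed
  have gK: "g ` K \<subseteq> CY" by (auto simp: g_def CY_def)
  have surj: "CY \<subseteq> g ` K"
  proof
    fix y assume y: "y \<in> CY"
    define br where "br = rec_nat [] (\<lambda>n s. (y n = 1) # s)"
    have br0: "br 0 = []" and brS: "br (Suc n) = (y n = 1) # br n" for n by (simp_all add: br_def)
    have lbr: "length (br n) = n" for n by (induction n) (simp_all add: br0 brS)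
    define F where "F n = P \<inter> closure (Og (br n))" for n
    have "(\<Inter>n. F n) \<noteq> {}"
    proof (rule compact_space_imp_nest)
      show "compact_space (euclidean :: 'a topology)" using cpt by (simp add: compact_space_def)
      show "closedin euclidean (F n)" for n
        unfolding F_def using clP by (simp add: closed_closedin[symmetric] closed_Int)
      show "F n \<noteq> {}" for n unfolding F_def using good[of "br n"] closure_subset by blast
      show "decseq F" unfolding F_def by (rule decseq_SucI) (use sub' in \<open>auto simp: brS\<close>)
    qed
    then obtain x where x: "\<And>n. x \<in> F n" by blast
    have xK: "x \<in> K"
      unfolding K_def using x lbr by (auto simp: F_def)
    have "g x = y"
    proof
      fix n
      have xS: "x \<in> closure (Og ((y n = 1) # br n))" using x[of "Suc n"] by (simp add: F_def brS)
      show "g x n = y n"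
      proof (cases "y n = 1")
        case True
        then have "x \<in> A n" using xS lbr unfolding A_def by auto
        then show ?thesis using True by (simp add: g_def)
      next
        case False
        then have y0: "y n = 0" using y by (auto simp: CY_def)
        have "x \<in> B n" using xS lbr False unfolding B_def by auto
        then have "x \<notin> A n" using AB by blast
        then show ?thesis using y0 by (simp add: g_def)
      qed
    qed
    then show "y \<in> g ` K" using xK by blast
  qed
  define D' where "D' n = K \<inter> g -` CD n" for n
  have dD': "decseq D'" using CD_dec unfolding D'_def decseq_def by blast
  have iD': "(\<Inter>n. D' n) = {}" using CD_Inter unfolding D'_def by blast
  have "\<exists>V :: nat \<Rightarrow> 'a set. decseq V \<and> (\<forall>n. open (V n) \<and> D' n \<subseteq> V n) \<and> (\<Inter>n. V n) = {}"
    using delta[unfolded delta_space_def, rule_format, OF conjI[OF dD' iD']] .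
  then obtain V where V: "\<And>n. open (V n)" "\<And>n. D' n \<subseteq> V n" "(\<Inter>n. V n) = {}"
    by blast
  define W' where "W' n = CY - g ` (K - V n)" for n
  have clim: "closed (g ` (K - V n))" for n
  proof -
    have "compact (UNIV \<inter> (K \<inter> - V n))" using cpt clK V(1)[of n] by (intro compact_Int_closed) auto
    then have "compact (K - V n)" by (simp add: Diff_eq)
    moreover have "continuous_on (K - V n) g" using contg by (rule continuous_on_subset) auto
    ultimately show ?thesis by (intro compact_imp_closed compact_continuous_image)
  qed
  have opW: "openin (top_of_set CY) (W' n)" for n
  proof -
    have "W' n = CY \<inter> - g ` (K - V n)" by (auto simp: W'_def)
    then show ?thesis using clim[of n] by (simp add: openin_open_Int open_Compl)
  qed
  have CDW: "CD n \<subseteq> W' n" for n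
  proof
    fix y assume y: "y \<in> CD n"
    have "y \<notin> g ` (K - V n)"
    proof
      assume "y \<in> g ` (K - V n)"
      then obtain x where "x \<in> K" "x \<notin> V n" "y = g x" by blast
      then have "x \<in> D' n" using y by (auto simp: D'_def)
      then show False using V(2) \<open>x \<notin> V n\<close> by blast
    qed
    then show "y \<in> W' n" using y CD_sub unfolding W'_def by blast
  qed
  have dense: "(top_of_set CY) closure_of (W' n) = topspace (top_of_set CY)" for n
  proof -
    have "CY \<subseteq> closure (W' n)"
    proof
      fix y assume "y \<in> CY"
      then have "y \<in> closure (CD n)" by (rule CD_dense)
      then show "y \<in> closure (W' n)" using closure_mono[OF CDW[of n]] by blast
    qed
    moreover have "W' n \<subseteq> CY" by (auto simp: W'_def)
    ultimately show ?thesis by (auto simp: closure_of_subtopology Int_absorb1)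
  qed
  have "(top_of_set CY) closure_of \<Inter>(range W') = topspace (top_of_set CY)"
  proof (rule Baire_category)
    have "closedin euclidean CY" using CY_closed by (simp add: closed_closedin[symmetric])
    then show "completely_metrizable_space (top_of_set CY) \<or>
        locally_compact_space (top_of_set CY) \<and> regular_space (top_of_set CY)"
      using completely_metrizable_space_closedin[OF completely_metrizable_space_euclidean] by blast
    show "countable (range W')" by simp
    show "openin (top_of_set CY) T \<and> (top_of_set CY) closure_of T = topspace (top_of_set CY)"
      if "T \<in> range W'" for T using that opW dense by blast
  qed
  moreover have "(\<lambda>_. 0) \<in> CY" by (simp add: CY_def)
  ultimately have "\<Inter>(range W') \<noteq> {}" by auto
  then obtain y where y: "\<And>n. y \<in> W' n" by blast
  then have "y \<in> CY" by (auto simp: W'_def)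
  then obtain x where x: "x \<in> K" "y = g x" using surj by blast
  then obtain n where "x \<notin> V n" using V(3) by blast
  then have "y \<in> g ` (K - V n)" using x by blast
  then show False using y[of n] by (simp add: W'_def)
qed


theorem corollary3p14:
  shows "(compact (UNIV :: 'a::t2_space set) \<and> infinite (UNIV :: 'a set) \<and> delta_space TYPE('a)
            \<longrightarrow> \<not> grothendieck TYPE('a \<Rightarrow>\<^sub>C real))
       \<and> ((\<exists>m :: 'b::{wellorder, linorder_topology}. (\<forall>x. x \<le> m) \<and> uncountable {..<m}
              \<and> (\<forall>x<m. countable {..<x}))
            \<longrightarrow> \<not> grothendieck TYPE('b \<Rightarrow>\<^sub>C real) \<and> \<not> delta_space TYPE('b))"
proof (intro conjI impI)
  assume H: "compact (UNIV :: 'a::t2_space set) \<and> infinite (UNIV :: 'a set) \<and> delta_space TYPE('a)"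
  then have cpt: "compact (UNIV :: 'a set)" and inf: "infinite (UNIV :: 'a set)"
    and del: "delta_space TYPE('a)" by auto
  have "\<exists>(p::nat \<Rightarrow> 'a) x. (\<forall>n. p n \<noteq> x) \<and> p \<longlonglongrightarrow> x"
    by (rule scattered_seq[OF cpt inf delta_scattered[OF cpt del]])
  then obtain p :: "nat \<Rightarrow> 'a" and x where "\<forall>n. p n \<noteq> x" "p \<longlonglongrightarrow> x" by blast
  then show "\<not> grothendieck TYPE('a \<Rightarrow>\<^sub>C real)"
    using seq_to_not_groth[OF cpt] by blast
next
  assume "\<exists>m :: 'b::{wellorder, linorder_topology}. (\<forall>x. x \<le> m) \<and> uncountable {..<m}
              \<and> (\<forall>x<m. countable {..<x})"
  then obtain m :: 'b where m: "\<forall>x. x \<le> m" "uncountable {..<m}" "\<forall>x<m. countable {..<x}" by blast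
  show "\<not> grothendieck TYPE('b \<Rightarrow>\<^sub>C real)" by (rule omega1_not_groth[OF m])
  show "\<not> delta_space TYPE('b)" by (rule omega1_not_delta[OF m(2,3)])
qed

end
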